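(* Let $A$ be a commutative ring with identity and $G$ a subgroup of the group $A^\times$ of units of $A$. Then the hypergroup $(A/G,\oplus)$ is realizable.
   Context: $G$ induces the equivalence relation $a\sim b\iff a=gb$ for some $g\in G$ on $A$; $A/G=\{[a]:a\in A\}$ is the set of classes, with hyperaddition $[a]\oplus[b]=\{[c]: c=g_1a+g_2b \text{ for some } g_1,g_2\in G\}$. A hypergroup is a nonempty set with a hyperoperation into nonempty subsets that is associative, has a unique identity $e$, unique inverses $h^{-1}$ with $e\in(h^{-1}*h)\cap(h*h^{-1})$, and is reversible ($c\in a*b\Rightarrow a\in c*b^{-1},\ b\in a^{-1}*c$). For a nonempty set $X$: $1_X$ is the diagonal, $p^*=\{(a,b):(b,a)\in p\}$, $xp=\{y:(x,y)\in p\}$. An association scheme on $X$ is a partition $S$ of $X\times X$ with $1_X\in S$, closed under $p\mapsto p^*$, such that for all $p,q,r\in S$ there is a cardinal $a_{pq}^r$ with $|yp\cap zq^*|=a_{pq}^r$ for all $y\in X$, $z\in yr$. $\mathbf{H}(S)$ is the hypergroup on $S$ with $p*q=\{r: a_{pq}^r\ge1\}$, identity $1_X$, inverse $p^*$. A hypergroup is realizable if it is isomorphic to $\mathbf{H}(S)$ for some association scheme $S$. *)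

theory Defs
  imports Main "HOL-Library.Equipollence"
begin

definition out :: "('x \<times> 'x) set \<Rightarrow> 'x \<Rightarrow> 'x set" where
  "out p x = {y. (x, y) \<in> p}"

text \<open>Association scheme on X (intersection numbers are arbitrary cardinals,
  expressed as: the sets  yp \<inter> zq*  all have the same cardinality for (y,z) in r).\<close>
definition assoc_scheme :: "'x set \<Rightarrow> ('x \<times> 'x) set set \<Rightarrow> bool" where
  "assoc_scheme X S \<longleftrightarrow>
     X \<noteq> {} \<and>
     (\<forall>p\<in>S. p \<noteq> {}) \<and>
     (\<forall>p\<in>S. \<forall>q\<in>S. p \<noteq> q \<longrightarrow> p \<inter> q = {}) \<and>
     \<Union>S = X \<times> X \<and>
     Id_on X \<in> S \<and>
     (\<forall>p\<in>S. p\<inverse> \<in> S) \<and>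
     (\<forall>p\<in>S. \<forall>q\<in>S. \<forall>r\<in>S. \<exists>c :: 'x set.
        \<forall>y z. (y, z) \<in> r \<longrightarrow> (out p y \<inter> out (q\<inverse>) z) \<approx> c)"

text \<open>Hyperoperation of H(S):  p * q = {r in S. a_pq^r \<ge> 1}.\<close>
definition scheme_prod :: "('x \<times> 'x) set set \<Rightarrow> ('x \<times> 'x) set \<Rightarrow> ('x \<times> 'x) set \<Rightarrow> ('x \<times> 'x) set set" where
  "scheme_prod S p q = {r \<in> S. \<forall>(y, z)\<in>r. out p y \<inter> out (q\<inverse>) z \<noteq> {}}"

definition realizable_on :: "'x itself \<Rightarrow> 'h set \<Rightarrow> ('h \<Rightarrow> 'h \<Rightarrow> 'h set) \<Rightarrow> bool" where
  "realizable_on _ H op \<longleftrightarrow>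
     (\<exists>(X :: 'x set) S \<phi>. assoc_scheme X S \<and> bij_betw \<phi> H S \<and>
        (\<forall>a\<in>H. \<forall>b\<in>H. \<phi> ` op a b = scheme_prod S (\<phi> a) (\<phi> b)))"

definition unit_subgroup :: "'a::comm_ring_1 set \<Rightarrow> bool" where
  "unit_subgroup G \<longleftrightarrow> 1 \<in> G \<and> (\<forall>g\<in>G. \<forall>h\<in>G. g * h \<in> G) \<and>
     (\<forall>g\<in>G. \<exists>h\<in>G. g * h = 1)"

definition orb :: "'a::comm_ring_1 set \<Rightarrow> 'a \<Rightarrow> 'a set" where
  "orb G a = (\<lambda>g. g * a) ` G"

definition quot :: "'a::comm_ring_1 set \<Rightarrow> 'a set set" where
  "quot G = range (orb G)"

definition hyperadd :: "'a::comm_ring_1 set \<Rightarrow> 'a set \<Rightarrow> 'a set \<Rightarrow> 'a set set" where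
  "hyperadd G x y = {orb G c | c. \<exists>a b g1 g2. x = orb G a \<and> y = orb G b \<and>
       g1 \<in> G \<and> g2 \<in> G \<and> c = g1 * a + g2 * b}"

end

theory Submission
  imports Defs
begin

definition rel :: "'a::comm_ring_1 set \<Rightarrow> ('a \<times> 'a) set" where
  "rel x = {(u,v). v - u \<in> x}"

lemma ug_inv: "unit_subgroup G \<Longrightarrow> g \<in> G \<Longrightarrow> \<exists>h\<in>G. g * h = 1"
  by (auto simp: unit_subgroup_def)

lemma orb_mem: "unit_subgroup G \<Longrightarrow> g \<in> G \<Longrightarrow> x \<in> orb G a \<Longrightarrow> g * x \<in> orb G a"
  unfolding orb_def unit_subgroup_def
  by (auto simp: image_iff mult.assoc[symmetric])

lemma orb_self: "unit_subgroup G \<Longrightarrow> a \<in> orb G a"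
  unfolding orb_def unit_subgroup_def by force

lemma orb_sub: assumes G: "unit_subgroup G" and b: "b \<in> orb G a" shows "orb G b \<subseteq> orb G a"
proof
  fix x assume "x \<in> orb G b"
  then obtain h where h: "h \<in> G" "x = h * b" unfolding orb_def by blast
  show "x \<in> orb G a" unfolding h(2) by (rule orb_mem[OF G h(1) b])
qed

lemma orb_eq: assumes G: "unit_subgroup G" and b: "b \<in> orb G a" shows "orb G b = orb G a"
proof
  show "orb G b \<subseteq> orb G a" by (rule orb_sub[OF G b])
  obtain g where g: "g \<in> G" "b = g * a" using b unfolding orb_def by blast
  obtain h where h: "h \<in> G" "g * h = 1" using ug_inv[OF G g(1)] by blast
  have "h * b = (h * g) * a" using g(2) by (simp add: mult.assoc)
  also have "h * g = 1" using h(2) by (simp add: mult.commute)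
  finally have "a = h * b" by simp
  hence "a \<in> orb G b" unfolding orb_def using h(1) by (rule image_eqI)
  thus "orb G a \<subseteq> orb G b" by (rule orb_sub[OF G])
qed

lemma orb_neg: "(x \<in> orb G (-a)) = (-x \<in> orb G a)"
proof
  assume "x \<in> orb G (-a)"
  then obtain g where g: "g \<in> G" "x = g * (-a)" unfolding orb_def by blast
  hence "-x = g * a" by simp
  thus "-x \<in> orb G a" unfolding orb_def using g(1) by (rule image_eqI)
next
  assume "-x \<in> orb G a"
  then obtain g where g: "g \<in> G" "-x = g * a" unfolding orb_def by blast
  hence "x = g * (-a)" by (metis minus_minus mult_minus_right)
  thus "x \<in> orb G (-a)" unfolding orb_def using g(1) by (rule image_eqI)
qed

lemma rel_inj: "rel x = rel y \<Longrightarrow> x = y"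
proof -
  assume "rel x = rel y"
  hence "\<And>v. (0,v) \<in> rel x \<longleftrightarrow> (0,v) \<in> rel y" by simp
  thus "x = y" by (auto simp: rel_def)
qed

theorem proposition5p14:
  fixes G :: "'a::comm_ring_1 set"
  assumes "unit_subgroup G"
  shows "realizable_on TYPE('a) (quot G) (hyperadd G)"
proof -
  note G = assms
  define S where "S = rel ` quot G"
  have bij: "bij_betw rel (quot G) S"
    unfolding S_def bij_betw_def inj_on_def using rel_inj by blast
  have scheme: "assoc_scheme (UNIV :: 'a set) S"
    unfolding assoc_scheme_def
  proof (intro conjI ballI impI)
    show "(UNIV :: 'a set) \<noteq> {}" by simp
  next
    fix p assume "p \<in> S"
    then obtain a where p: "p = rel (orb G a)" by (auto simp: S_def quot_def)
    hence "(0, a) \<in> p" using orb_self[OF G] by (auto simp: rel_def)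
    thus "p \<noteq> {}" by blast
  next
    fix p q assume "p \<in> S" "q \<in> S" "p \<noteq> q"
    then obtain a b where p: "p = rel (orb G a)" and q: "q = rel (orb G b)"
      by (auto simp: S_def quot_def)
    show "p \<inter> q = {}"
    proof (rule ccontr)
      assume "p \<inter> q \<noteq> {}"
      then obtain u v where "v - u \<in> orb G a" "v - u \<in> orb G b"
        using p q by (auto simp: rel_def)
      hence "orb G a = orb G b" using orb_eq[OF G] by metis
      thus False using p q \<open>p \<noteq> q\<close> by simp
    qed
  next
    show "\<Union>S = UNIV \<times> UNIV"
    proof (rule set_eqI, rule iffI)
      fix z :: "'a \<times> 'a" assume "z \<in> UNIV \<times> UNIV"
      obtain u v where z: "z = (u, v)" by (cases z)
      have "(u, v) \<in> rel (orb G (v - u))" using orb_self[OF G] by (auto simp: rel_def)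
      moreover have "rel (orb G (v - u)) \<in> S" by (auto simp: S_def quot_def)
      ultimately show "z \<in> \<Union>S" using z by blast
    qed simp
  next
    have "orb G 0 = {0}" using G by (auto simp: orb_def unit_subgroup_def)
    hence "Id_on UNIV = rel (orb G 0)" by (auto simp: rel_def Id_on_def)
    thus "Id_on UNIV \<in> S" by (auto simp: S_def quot_def)
  next
    fix p assume "p \<in> S"
    then obtain a where p: "p = rel (orb G a)" by (auto simp: S_def quot_def)
    have "p\<inverse> = rel (orb G (-a))"
      using p by (auto simp: rel_def orb_neg)
    thus "p\<inverse> \<in> S" by (auto simp: S_def quot_def)
  next
    fix p q r assume "p \<in> S" "q \<in> S" "r \<in> S"
    then obtain a b c where p: "p = rel (orb G a)" and q: "q = rel (orb G b)"
      and r: "r = rel (orb G c)" by (auto simp: S_def quot_def)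
    define W where "W = {w. w \<in> orb G a \<and> c - w \<in> orb G b}"
    show "\<exists>C :: 'a set. \<forall>y z. (y, z) \<in> r \<longrightarrow> (out p y \<inter> out (q\<inverse>) z) \<approx> C"
    proof (intro exI allI impI)
      fix y z assume "(y, z) \<in> r"
      then obtain g where g: "g \<in> G" "z - y = g * c" using r by (auto simp: rel_def orb_def)
      obtain h where h: "h \<in> G" "g * h = 1" using ug_inv[OF G g(1)] by blast
      have hg: "h * g = 1" using h by (simp add: mult.commute)
      have E: "out p y \<inter> out (q\<inverse>) z = {w. w - y \<in> orb G a \<and> z - w \<in> orb G b}"
        using p q by (auto simp: out_def rel_def)
      have "bij_betw (\<lambda>w. y + g * w) W (out p y \<inter> out (q\<inverse>) z)"
        unfolding E
      proof (rule bij_betw_byWitness[where f'="\<lambda>w. h * (w - y)"])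
        show "\<forall>w\<in>W. h * (y + g * w - y) = w" using hg by (simp add: mult.assoc[symmetric])
        show "\<forall>w\<in>{w. w - y \<in> orb G a \<and> z - w \<in> orb G b}. y + g * (h * (w - y)) = w"
          using h by (simp add: mult.assoc[symmetric])
        show "(\<lambda>w. y + g * w) ` W \<subseteq> {w. w - y \<in> orb G a \<and> z - w \<in> orb G b}"
        proof
          fix v assume "v \<in> (\<lambda>w. y + g * w) ` W"
          then obtain w where w: "w \<in> W" "v = y + g * w" by blast
          have "z - v = g * (c - w)" using w g by (simp add: algebra_simps)
          thus "v \<in> {w. w - y \<in> orb G a \<and> z - w \<in> orb G b}"
            using w g orb_mem[OF G] by (auto simp: W_def)
        qed
        show "(\<lambda>w. h * (w - y)) ` {w. w - y \<in> orb G a \<and> z - w \<in> orb G b} \<subseteq> W"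
        proof
          fix v assume "v \<in> (\<lambda>w. h * (w - y)) ` {w. w - y \<in> orb G a \<and> z - w \<in> orb G b}"
          then obtain w where w: "w - y \<in> orb G a" "z - w \<in> orb G b" "v = h * (w - y)" by blast
          have "c = h * (z - y)" using g hg by (simp add: mult.assoc[symmetric])
          hence "c - v = h * (z - w)" using w(3) by (simp add: right_diff_distrib)
          thus "v \<in> W" using w h orb_mem[OF G] by (auto simp: W_def)
        qed
      qed
      thus "(out p y \<inter> out (q\<inverse>) z) \<approx> W" using eqpoll_def eqpoll_sym by blast
    qed
  qed
  have hom: "rel ` hyperadd G x y = scheme_prod S (rel x) (rel y)"
    if x: "x \<in> quot G" and y: "y \<in> quot G" for x y
  proof
    obtain a b where xa: "x = orb G a" and yb: "y = orb G b" using x y by (auto simp: quot_def)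
    show "rel ` hyperadd G x y \<subseteq> scheme_prod S (rel x) (rel y)"
    proof
      fix r assume "r \<in> rel ` hyperadd G x y"
      then obtain a' b' g1 g2 where r: "r = rel (orb G (g1 * a' + g2 * b'))"
        and ab: "x = orb G a'" "y = orb G b'" and gg: "g1 \<in> G" "g2 \<in> G"
        by (auto simp: hyperadd_def)
      have "r \<in> S" using r by (auto simp: S_def quot_def)
      moreover have "out (rel x) u \<inter> out ((rel y)\<inverse>) v \<noteq> {}" if uv: "(u, v) \<in> r" for u v
      proof -
        obtain g where g: "g \<in> G" "v - u = g * (g1 * a' + g2 * b')"
          using uv r by (auto simp: rel_def orb_def)
        have ggg1: "g * g1 \<in> G" "g * g2 \<in> G" using G g gg by (auto simp: unit_subgroup_def)
        define w where "w = u + g * g1 * a'"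
        have "w - u = (g * g1) * a'" by (simp add: w_def)
        hence 1: "w - u \<in> x" using ab ggg1 orb_mem[OF G _ orb_self[OF G]] by auto
        have "v - w = (g * g2) * b'" using g by (simp add: w_def algebra_simps)
        hence 2: "v - w \<in> y" using ab ggg1 orb_mem[OF G _ orb_self[OF G]] by auto
        have "w \<in> out (rel x) u \<inter> out ((rel y)\<inverse>) v" using 1 2 by (auto simp: out_def rel_def)
        thus ?thesis by blast
      qed
      ultimately show "r \<in> scheme_prod S (rel x) (rel y)" by (auto simp: scheme_prod_def)
    qed
    show "scheme_prod S (rel x) (rel y) \<subseteq> rel ` hyperadd G x y"
    proof
      fix r assume "r \<in> scheme_prod S (rel x) (rel y)"
      then have rS: "r \<in> S" and H: "\<forall>(u,v)\<in>r. out (rel x) u \<inter> out ((rel y)\<inverse>) v \<noteq> {}"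
        by (auto simp: scheme_prod_def)
      obtain c where r: "r = rel (orb G c)" using rS by (auto simp: S_def quot_def)
      have "(0, c) \<in> r" using r orb_self[OF G] by (auto simp: rel_def)
      with H have "out (rel x) 0 \<inter> out ((rel y)\<inverse>) c \<noteq> {}" by blast
      then obtain w where w: "w \<in> x" "c - w \<in> y" by (auto simp: out_def rel_def)
      obtain g1 g2 where gg: "g1 \<in> G" "g2 \<in> G" "w = g1 * a" "c - w = g2 * b"
        using w xa yb unfolding orb_def by blast
      have "c = g1 * a + g2 * b" using gg(3,4) by (metis diff_add_cancel add.commute)
      hence "orb G c \<in> hyperadd G x y" unfolding hyperadd_def using xa yb gg(1,2) by blast
      thus "r \<in> rel ` hyperadd G x y" using r by blast
    qed
  qed
  show ?thesis unfolding realizable_on_def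
    using scheme bij hom by blast
qed

end
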